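(* Let $G$ be a finite group and $H \leqslant G$ a nilpotent subgroup. If $|HP|$ divides $|G|$ for every Sylow subgroup $P$ of $G$ (for every prime), then $H$ is subnormal in $G$.
   Context: $HP$ denotes the product set $\{hx : h \in H, x \in P\}$. $H$ is subnormal in $G$ if there is a finite chain $H = H_0 \lhd H_1 \lhd \dots \lhd H_r = G$. *)

theory Defs
  imports "HOL-Algebra.Algebra"
begin

definition commutator_subgroup :: "('a, 'b) monoid_scheme \<Rightarrow> 'a set \<Rightarrow> 'a set \<Rightarrow> 'a set" where
  "commutator_subgroup G A B =
     generate G {a \<otimes>\<^bsub>G\<^esub> b \<otimes>\<^bsub>G\<^esub> inv\<^bsub>G\<^esub> a \<otimes>\<^bsub>G\<^esub> inv\<^bsub>G\<^esub> b | a b. a \<in> A \<and> b \<in> B}"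

fun lower_central :: "('a, 'b) monoid_scheme \<Rightarrow> 'a set \<Rightarrow> nat \<Rightarrow> 'a set" where
  "lower_central G H 0 = H"
| "lower_central G H (Suc n) = commutator_subgroup G (lower_central G H n) H"

definition nilpotent_subgroup :: "'a set \<Rightarrow> ('a, 'b) monoid_scheme \<Rightarrow> bool" where
  "nilpotent_subgroup H G \<longleftrightarrow> subgroup H G \<and> (\<exists>n. lower_central G H n = {\<one>\<^bsub>G\<^esub>})"

definition sylow_subgroup :: "nat \<Rightarrow> 'a set \<Rightarrow> ('a, 'b) monoid_scheme \<Rightarrow> bool" where
  "sylow_subgroup p P G \<longleftrightarrow> Factorial_Ring.prime p \<and> subgroup P G \<and>
     card P = p ^ Factorial_Ring.multiplicity p (order G)"

definition subnormal :: "'a set \<Rightarrow> ('a, 'b) monoid_scheme \<Rightarrow> bool" where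
  "subnormal H G \<longleftrightarrow> (\<exists>(r::nat) K. K 0 = H \<and> K r = carrier G \<and>
     (\<forall>i\<le>r. subgroup (K i) G) \<and>
     (\<forall>i<r. normal (K i) (G\<lparr>carrier := K (Suc i)\<rparr>)))"

end

theory Submission
  imports Defs
begin

context group
begin

definition sn :: "'a set \<Rightarrow> 'a set \<Rightarrow> bool" where
  "sn A B \<longleftrightarrow> (\<exists>(r::nat) K. K 0 = A \<and> K r = B \<and> (\<forall>i\<le>r. subgroup (K i) G) \<and>
     (\<forall>i<r. normal (K i) (G\<lparr>carrier := K (Suc i)\<rparr>)))"

lemma inv_cancel_left' [simp]: "x \<in> carrier G \<Longrightarrow> y \<in> carrier G \<Longrightarrow> inv x \<otimes> (x \<otimes> y) = y"
  by (simp add: m_assoc[symmetric])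

lemma cancel_left_inv' [simp]: "x \<in> carrier G \<Longrightarrow> y \<in> carrier G \<Longrightarrow> x \<otimes> (inv x \<otimes> y) = y"
  by (simp add: m_assoc[symmetric])

lemma sn_refl: "subgroup A G \<Longrightarrow> sn A A"
  unfolding sn_def by (rule exI[of _ 0]) auto

lemma sn_cons:
  assumes "subgroup A G" "normal A (G\<lparr>carrier := B\<rparr>)" "sn B C"
  shows "sn A C"
proof -
  obtain r K where K: "K 0 = B" "K r = C" "\<forall>i\<le>r. subgroup (K i) G"
    "\<forall>i<r. normal (K i) (G\<lparr>carrier := K (Suc i)\<rparr>)"
    using assms(3) unfolding sn_def by blast
  define K' where "K' = (\<lambda>i. if i = 0 then A else K (i - 1))"
  show ?thesis unfolding sn_def
  proof (intro exI[of _ "Suc r"] exI[of _ K'] conjI allI impI)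
    show "K' 0 = A" by (simp add: K'_def)
    show "K' (Suc r) = C" by (simp add: K'_def K)
    fix i assume "i \<le> Suc r" then show "subgroup (K' i) G"
      using K assms by (cases i) (auto simp: K'_def)
  next
    fix i assume "i < Suc r" then show "normal (K' i) (G\<lparr>carrier := K' (Suc i)\<rparr>)"
      using K assms by (cases i) (auto simp: K'_def)
  qed
qed

lemma sn_trans:
  assumes "sn A B" "sn B C" shows "sn A C"
proof -
  obtain r K where K: "K 0 = A" "K r = B" "\<forall>i\<le>r. subgroup (K i) G"
    "\<forall>i<r. normal (K i) (G\<lparr>carrier := K (Suc i)\<rparr>)"
    using assms(1) unfolding sn_def by blast
  have "\<forall>A'. (\<exists>K. K 0 = A' \<and> K r = B \<and> (\<forall>i\<le>r. subgroup (K i) G) \<and>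
     (\<forall>i<r. normal (K i) (G\<lparr>carrier := K (Suc i)\<rparr>))) \<longrightarrow> sn A' C"
  proof (induction r)
    case 0 then show ?case using assms(2) by auto
  next
    case (Suc r)
    show ?case
    proof (intro allI impI)
      fix A' assume "\<exists>K. K 0 = A' \<and> K (Suc r) = B \<and> (\<forall>i\<le>Suc r. subgroup (K i) G) \<and>
        (\<forall>i<Suc r. normal (K i) (G\<lparr>carrier := K (Suc i)\<rparr>))"
      then obtain K where K: "K 0 = A'" "K (Suc r) = B" "\<forall>i\<le>Suc r. subgroup (K i) G"
        "\<forall>i<Suc r. normal (K i) (G\<lparr>carrier := K (Suc i)\<rparr>)" by blast
      have "sn (K 1) C"
        using Suc.IH[rule_format, of "K 1"] K
        by (intro Suc.IH[rule_format] exI[of _ "\<lambda>i. K (Suc i)"]) auto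
      then show "sn A' C" using K sn_cons[of A' "K 1" C] by auto
    qed
  qed
  then show ?thesis using K by blast
qed

lemma normalI':
  assumes "subgroup A G" "subgroup B G" "A \<subseteq> B"
    "\<And>g a. g \<in> B \<Longrightarrow> a \<in> A \<Longrightarrow> g \<otimes> a \<otimes> inv g \<in> A"
  shows "normal A (G\<lparr>carrier := B\<rparr>)"
proof -
  interpret B: group "G\<lparr>carrier := B\<rparr>" using subgroup_imp_group assms(2) .
  show ?thesis
    unfolding B.normal_inv_iff
    using subgroup_incl[OF assms(1,2,3)] assms(4) m_inv_consistent[OF assms(2)] by auto
qed

lemma conj_inv_dir:
  assumes "finite K" "subgroup K G" "g \<in> carrier G" "\<forall>k\<in>K. g \<otimes> k \<otimes> inv g \<in> K"
    "k \<in> K"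
  shows "inv g \<otimes> k \<otimes> g \<in> K"
proof -
  have Kc: "K \<subseteq> carrier G" using assms(2) subgroup.subset by blast
  let ?f = "\<lambda>k. g \<otimes> k \<otimes> inv g"
  have "inj_on ?f K"
  proof (rule inj_onI)
    fix x y assume "x \<in> K" "y \<in> K" "g \<otimes> x \<otimes> inv g = g \<otimes> y \<otimes> inv g"
    then show "x = y" using Kc assms(3)
      by (metis subsetD inv_closed m_closed r_cancel l_cancel)
  qed
  moreover have "?f ` K \<subseteq> K" using assms(4) by auto
  ultimately have "?f ` K = K" using endo_inj_surj assms(1) by blast
  then obtain k' where "k' \<in> K" "k = ?f k'" using assms(5) by blast
  then have "inv g \<otimes> k \<otimes> g = k'" using Kc assms(3) by (auto simp: m_assoc)
  then show ?thesis using \<open>k' \<in> K\<close> by simp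
qed

lemma sn_growth:
  assumes fin: "finite (carrier G)" and A: "subgroup A G" and B: "subgroup B G" and AB: "A \<subseteq> B"
    and grow: "\<And>K. subgroup K G \<Longrightarrow> A \<subseteq> K \<Longrightarrow> K \<subseteq> B \<Longrightarrow> K \<noteq> B \<Longrightarrow>
       \<exists>y\<in>B. y \<notin> K \<and> (\<forall>k\<in>K. y \<otimes> k \<otimes> inv y \<in> K)"
  shows "sn A B"
proof -
  have Bc: "B \<subseteq> carrier G" using B subgroup.subset by blast
  have finB: "finite B" using fin Bc finite_subset by blast
  have main: "\<And>K. card B - card K = n \<Longrightarrow> subgroup K G \<Longrightarrow> A \<subseteq> K \<Longrightarrow> K \<subseteq> B \<Longrightarrow> sn K B" for n
  proof (induction n rule: less_induct)
    case (less n K)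
    show ?case
    proof (cases "K = B")
      case True then show ?thesis using sn_refl less by simp
    next
      case False
      obtain y where y: "y \<in> B" "y \<notin> K" "\<forall>k\<in>K. y \<otimes> k \<otimes> inv y \<in> K"
        using grow[OF less(3,4,5) False] by blast
      have Kc: "K \<subseteq> carrier G" using less(3) subgroup.subset by blast
      have finK: "finite K" using finB less(5) finite_subset by blast
      define N where "N = {g\<in>B. \<forall>k\<in>K. g \<otimes> k \<otimes> inv g \<in> K}"
      have NB: "N \<subseteq> B" unfolding N_def by auto
      have subN: "subgroup N G"
      proof (rule subgroupI)
        show "N \<subseteq> carrier G" using NB Bc by auto
        have "\<one> \<in> N"
          using subgroup.one_closed[OF B] Kc unfolding N_def by (auto simp: subsetD)
        then show "N \<noteq> {}" by blast
      next
        fix g assume g: "g \<in> N"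
        then have gc: "g \<in> carrier G" using NB Bc by auto
        have "\<forall>k\<in>K. inv g \<otimes> k \<otimes> inv (inv g) \<in> K"
          using conj_inv_dir[OF finK less(3) gc] g gc unfolding N_def by auto
        then show "inv g \<in> N" using g subgroup.m_inv_closed[OF B] unfolding N_def by auto
      next
        fix g h assume g: "g \<in> N" and h: "h \<in> N"
        then have gc: "g \<in> carrier G" and hc: "h \<in> carrier G" using NB Bc by auto
        have "\<forall>k\<in>K. g \<otimes> h \<otimes> k \<otimes> inv (g \<otimes> h) \<in> K"
        proof
          fix k assume k: "k \<in> K"
          have kc: "k \<in> carrier G" using k Kc by auto
          have "g \<otimes> h \<otimes> k \<otimes> inv (g \<otimes> h) = g \<otimes> (h \<otimes> k \<otimes> inv h) \<otimes> inv g"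
            using gc hc kc by (simp add: m_assoc inv_mult_group)
          moreover have "h \<otimes> k \<otimes> inv h \<in> K" using h k unfolding N_def by auto
          ultimately show "g \<otimes> h \<otimes> k \<otimes> inv (g \<otimes> h) \<in> K" using g unfolding N_def by auto
        qed
        then show "g \<otimes> h \<in> N" using g h subgroup.m_closed[OF B] unfolding N_def by auto
      qed
      have KN: "K \<subseteq> N"
        unfolding N_def using less(5) Kc
        by (auto intro!: subgroup.m_closed[OF less(3)] subgroup.m_inv_closed[OF less(3)])
      have yN: "y \<in> N" using y unfolding N_def by auto
      have nor: "normal K (G\<lparr>carrier := N\<rparr>)"
        using normalI'[OF less(3) subN KN] unfolding N_def by auto
      have finN: "finite N" using finB NB finite_subset by blast
      have "card K < card N"
        using KN yN y(2) finN by (metis psubsetI psubset_card_mono)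
      moreover have "card N \<le> card B" using NB finB card_mono by blast
      ultimately have "card B - card N < n" using less(2) by linarith
      then have "sn N B" using less.IH subN less(4) KN NB by blast
      then show ?thesis using sn_cons[OF less(3) nor] by blast
    qed
  qed
  show ?thesis using main[OF refl A order.refl AB] .
qed

lemma card_set_mult:
  assumes fin: "finite (carrier G)" and A: "subgroup A G" and B: "subgroup B G"
  shows "card (A <#> B) * card (A \<inter> B) = card A * card B"
proof -
  have Ac: "A \<subseteq> carrier G" and Bc: "B \<subseteq> carrier G" using A B subgroup.subset by auto
  have finA: "finite A" and finB: "finite B" using Ac Bc fin finite_subset by auto
  define F where "F = (\<lambda>z. {p \<in> A \<times> B. fst p \<otimes> snd p = z})"
  have U: "A \<times> B = (\<Union>z\<in>A <#> B. F z)"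
    unfolding F_def set_mult_def by fastforce
  have finAB: "finite (A <#> B)" using finA finB unfolding set_mult_def by auto
  have cardF: "card (F z) = card (A \<inter> B)" if z: "z \<in> A <#> B" for z
  proof -
    obtain a0 b0 where ab0: "a0 \<in> A" "b0 \<in> B" "z = a0 \<otimes> b0" using z unfolding set_mult_def by auto
    have a0c: "a0 \<in> carrier G" and b0c: "b0 \<in> carrier G" using ab0 Ac Bc by auto
    define f where "f = (\<lambda>t. (a0 \<otimes> t, inv t \<otimes> b0))"
    define g where "g = (\<lambda>p::'a \<times> 'a. inv a0 \<otimes> fst p)"
    have "bij_betw g (F z) (A \<inter> B)"
    proof (rule bij_betw_byWitness[where f'=f])
      show "\<forall>a\<in>F z. f (g a) = a"
      proof
        fix p assume p: "p \<in> F z"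
        obtain a b where pab: "p = (a, b)" "a \<in> A" "b \<in> B" "a \<otimes> b = z" using p unfolding F_def by auto
        have ac: "a \<in> carrier G" and bc: "b \<in> carrier G" using pab Ac Bc by auto
        have "inv (inv a0 \<otimes> a) \<otimes> b0 = inv a \<otimes> (a0 \<otimes> b0)"
          using ac a0c b0c by (simp add: inv_mult_group m_assoc)
        also have "\<dots> = b" using pab(4) ab0(3) ac bc by (metis inv_cancel_left')
        finally show "f (g p) = p" using pab a0c ac unfolding f_def g_def by simp
      qed
      show "\<forall>a'\<in>A \<inter> B. g (f a') = a'"
        using a0c Ac unfolding f_def g_def by auto
      show "f ` (A \<inter> B) \<subseteq> F z"
      proof
        fix p assume "p \<in> f ` (A \<inter> B)"
        then obtain t where t: "t \<in> A" "t \<in> B" "p = f t" by auto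
        have tc: "t \<in> carrier G" using t Ac by auto
        have "a0 \<otimes> t \<in> A" using A ab0 t by (simp add: subgroup.m_closed)
        moreover have "inv t \<otimes> b0 \<in> B" using B ab0 t by (simp add: subgroup.m_closed subgroup.m_inv_closed)
        moreover have "a0 \<otimes> t \<otimes> (inv t \<otimes> b0) = z" using ab0 a0c b0c tc by (simp add: m_assoc)
        ultimately show "p \<in> F z" using t unfolding F_def f_def by simp
      qed
      show "g ` F z \<subseteq> A \<inter> B"
      proof
        fix x assume "x \<in> g ` F z"
        then obtain a b where pab: "a \<in> A" "b \<in> B" "a \<otimes> b = z" "x = inv a0 \<otimes> a"
          unfolding F_def g_def by auto
        have ac: "a \<in> carrier G" and bc: "b \<in> carrier G" using pab Ac Bc by auto
        have xA: "x \<in> A" using pab A ab0 by (simp add: subgroup.m_closed subgroup.m_inv_closed)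
        have "inv a0 \<otimes> a = b0 \<otimes> inv b"
        proof -
          have "a0 \<otimes> b0 = a \<otimes> b" using pab ab0 by simp
          then have "inv a0 \<otimes> (a0 \<otimes> b0) \<otimes> inv b = inv a0 \<otimes> (a \<otimes> b) \<otimes> inv b" by simp
          then show ?thesis using a0c b0c ac bc by (simp add: m_assoc)
        qed
        then have "x \<in> B" using pab B ab0 by (simp add: subgroup.m_closed subgroup.m_inv_closed)
        then show "x \<in> A \<inter> B" using xA by simp
      qed
    qed
    then show ?thesis by (simp add: bij_betw_same_card)
  qed
  have "card (A \<times> B) = (\<Sum>z\<in>A <#> B. card (F z))"
    unfolding U
    by (rule card_UN_disjoint[OF finAB]) (auto simp: F_def finA finB)
  also have "\<dots> = card (A <#> B) * card (A \<inter> B)" using cardF by simp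
  finally show ?thesis by (simp add: card_cartesian_product)
qed

lemma card_subgroup_dvd:
  assumes "subgroup A G" "subgroup B G" "A \<subseteq> B"
  shows "card A dvd card B"
proof -
  interpret B: group "G\<lparr>carrier := B\<rparr>" using subgroup_imp_group assms(2) .
  have "card (rcosets\<^bsub>G\<lparr>carrier := B\<rparr>\<^esub> A) * card A = order (G\<lparr>carrier := B\<rparr>)"
    using B.lagrange subgroup_incl[OF assms] by blast
  then have "card (rcosets\<^bsub>G\<lparr>carrier := B\<rparr>\<^esub> A) * card A = card B"
    by (simp add: order_def)
  then show ?thesis by (metis dvd_triv_right)
qed

lemma sub_pow_closed: "subgroup A G \<Longrightarrow> x \<in> A \<Longrightarrow> x [^] (n::nat) \<in> A"
  by (induction n) (auto simp: subgroup.one_closed subgroup.m_closed)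

lemma pow_card_subgroup:
  assumes fin: "finite (carrier G)" and A: "subgroup A G" and x: "x \<in> A"
  shows "x [^] card A = \<one>"
proof -
  have xc: "x \<in> carrier G" using A x subgroup.subset by blast
  have "generate G {x} \<subseteq> A" using generate_subgroup_incl A x by auto
  then have "card (generate G {x}) dvd card A"
    using card_subgroup_dvd[OF generate_is_subgroup A] xc by auto
  then have "ord x dvd card A" using generate_pow_card[OF xc] by simp
  then show ?thesis using pow_eq_id[OF xc] by simp
qed

lemma conj_pow:
  assumes "g \<in> carrier G" "s \<in> carrier G"
  shows "(g \<otimes> s \<otimes> inv g) [^] (n::nat) = g \<otimes> (s [^] n) \<otimes> inv g"
  using assms by (induction n) (auto simp: m_assoc)

lemma lower_central_sub:
  assumes "subgroup H G" shows "lower_central G H i \<subseteq> H"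
proof (induction i)
  case 0 then show ?case by simp
next
  case (Suc i)
  have "{a \<otimes> b \<otimes> inv a \<otimes> inv b | a b. a \<in> lower_central G H i \<and> b \<in> H} \<subseteq> H"
    using Suc assms by (auto intro!: subgroup.m_closed subgroup.m_inv_closed)
  then show ?case
    using generate_subgroup_incl[OF _ assms] unfolding commutator_subgroup_def lower_central.simps by blast
qed

lemma nil_growth:
  assumes nil: "nilpotent_subgroup H G" and K: "subgroup K G" "K \<subseteq> H" "K \<noteq> H"
  shows "\<exists>y\<in>H. y \<notin> K \<and> (\<forall>k\<in>K. y \<otimes> k \<otimes> inv y \<in> K)"
proof -
  have H: "subgroup H G" using nil unfolding nilpotent_subgroup_def by blast
  obtain n where n: "lower_central G H n = {\<one>}" using nil unfolding nilpotent_subgroup_def by blast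
  have ex: "\<exists>j. lower_central G H j \<subseteq> K" using n subgroup.one_closed[OF K(1)] by (intro exI[of _ n]) auto
  define j where "j = (LEAST j. lower_central G H j \<subseteq> K)"
  have j: "lower_central G H j \<subseteq> K" unfolding j_def by (rule LeastI_ex[OF ex])
  have j0: "j \<noteq> 0" using j K by auto
  then obtain i where i: "j = Suc i" using not0_implies_Suc by blast
  have "\<not> lower_central G H i \<subseteq> K"
    using not_less_Least[of i "\<lambda>j. lower_central G H j \<subseteq> K"] i unfolding j_def by auto
  then obtain y where y: "y \<in> lower_central G H i" "y \<notin> K" by blast
  have yH: "y \<in> H" using y lower_central_sub[OF H] by blast
  have Hc: "H \<subseteq> carrier G" using H subgroup.subset by blast
  have "\<forall>k\<in>K. y \<otimes> k \<otimes> inv y \<in> K"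
  proof
    fix k assume k: "k \<in> K"
    have kH: "k \<in> H" using k K by blast
    have yc: "y \<in> carrier G" and kc: "k \<in> carrier G" using yH kH Hc by auto
    have "y \<otimes> k \<otimes> inv y \<otimes> inv k \<in> lower_central G H (Suc i)"
      using y(1) kH unfolding lower_central.simps commutator_subgroup_def
      by (intro generate.incl) blast
    then have c: "y \<otimes> k \<otimes> inv y \<otimes> inv k \<in> K" using j i by auto
    have "y \<otimes> k \<otimes> inv y = (y \<otimes> k \<otimes> inv y \<otimes> inv k) \<otimes> k"
      using yc kc by (simp add: m_assoc)
    then show "y \<otimes> k \<otimes> inv y \<in> K" using c k subgroup.m_closed[OF K(1)] by metis
  qed
  then show ?thesis using yH y by blast
qed

lemma sn_nil:
  assumes fin: "finite (carrier G)" and nil: "nilpotent_subgroup H G"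
    and S: "subgroup S G" "S \<subseteq> H"
  shows "sn S H"
proof -
  have H: "subgroup H G" using nil unfolding nilpotent_subgroup_def by blast
  show ?thesis
    by (rule sn_growth[OF fin S(1) H S(2)]) (use nil_growth[OF nil] in blast)
qed

lemma normalizer_subgroup':
  assumes fin: "finite (carrier G)" and L: "subgroup L G"
  shows "subgroup {g \<in> carrier G. \<forall>z\<in>L. g \<otimes> z \<otimes> inv g \<in> L} G" (is "subgroup ?N G")
proof (rule subgroupI)
  have Lc: "L \<subseteq> carrier G" using L subgroup.subset by blast
  have finL: "finite L" using fin Lc finite_subset by blast
  show "?N \<subseteq> carrier G" by auto
  have "\<one> \<in> ?N" using Lc by (auto simp: subsetD)
  then show "?N \<noteq> {}" by blast
next
  have Lc: "L \<subseteq> carrier G" using L subgroup.subset by blast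
  have finL: "finite L" using fin Lc finite_subset by blast
  fix g assume g: "g \<in> ?N"
  have "\<forall>k\<in>L. inv g \<otimes> k \<otimes> inv (inv g) \<in> L"
    using conj_inv_dir[OF finL L] g by auto
  then show "inv g \<in> ?N" using g by auto
next
  have Lc: "L \<subseteq> carrier G" using L subgroup.subset by blast
  fix g h assume g: "g \<in> ?N" and h: "h \<in> ?N"
  have "\<forall>k\<in>L. g \<otimes> h \<otimes> k \<otimes> inv (g \<otimes> h) \<in> L"
  proof
    fix k assume k: "k \<in> L"
    have kc: "k \<in> carrier G" using k Lc by auto
    have "g \<otimes> h \<otimes> k \<otimes> inv (g \<otimes> h) = g \<otimes> (h \<otimes> k \<otimes> inv h) \<otimes> inv g"
      using g h kc by (simp add: m_assoc inv_mult_group)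
    then show "g \<otimes> h \<otimes> k \<otimes> inv (g \<otimes> h) \<in> L" using g h k by auto
  qed
  then show "g \<otimes> h \<in> ?N" using g h by auto
qed

lemma conj_generate:
  assumes L: "subgroup L G" and XX: "XX \<subseteq> carrier G" and g: "g \<in> carrier G"
    and gen: "\<And>x. x \<in> XX \<Longrightarrow> g \<otimes> x \<otimes> inv g \<in> L" and z: "z \<in> generate G XX"
  shows "g \<otimes> z \<otimes> inv g \<in> L"
  using z
proof (induction z rule: generate.induct)
  case one then show ?case using g subgroup.one_closed[OF L] by simp
next
  case (incl h) then show ?case using gen by blast
next
  case (inv h)
  have hc: "h \<in> carrier G" using inv XX by auto
  have "g \<otimes> inv h \<otimes> inv g = inv (g \<otimes> h \<otimes> inv g)" using g hc by (simp add: inv_mult_group m_assoc)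
  then show ?case using gen[OF inv] subgroup.m_inv_closed[OF L] by simp
next
  case (eng h1 h2)
  have "h1 \<in> carrier G" "h2 \<in> carrier G" using eng generate_in_carrier[OF XX] by auto
  then have "g \<otimes> (h1 \<otimes> h2) \<otimes> inv g = (g \<otimes> h1 \<otimes> inv g) \<otimes> (g \<otimes> h2 \<otimes> inv g)"
    using g by (simp add: m_assoc)
  then show ?case using eng subgroup.m_closed[OF L] by simp
qed

lemma norm_gen:
  assumes fin: "finite (carrier G)" and XX: "XX \<subseteq> carrier G" and YY: "YY \<subseteq> carrier G"
    and gen: "\<And>g x. g \<in> YY \<Longrightarrow> x \<in> XX \<Longrightarrow> g \<otimes> x \<otimes> inv g \<in> generate G XX"
    and g: "g \<in> generate G YY" and z: "z \<in> generate G XX"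
  shows "g \<otimes> z \<otimes> inv g \<in> generate G XX"
proof -
  let ?L = "generate G XX"
  have L: "subgroup ?L G" using generate_is_subgroup[OF XX] .
  have "YY \<subseteq> {g \<in> carrier G. \<forall>z\<in>?L. g \<otimes> z \<otimes> inv g \<in> ?L}"
    using conj_generate[OF L XX] gen YY by auto
  then have "generate G YY \<subseteq> {g \<in> carrier G. \<forall>z\<in>?L. g \<otimes> z \<otimes> inv g \<in> ?L}"
    using generate_subgroup_incl[OF _ normalizer_subgroup'[OF fin L]] by blast
  then show ?thesis using g z by blast
qed

lemma subgroup_set_mult_norm:
  assumes A: "subgroup A G" and B: "subgroup B G"
    and nor: "\<And>b a. b \<in> B \<Longrightarrow> a \<in> A \<Longrightarrow> b \<otimes> a \<otimes> inv b \<in> A"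
  shows "subgroup (A <#> B) G"
proof (rule subgroupI)
  have Ac: "A \<subseteq> carrier G" and Bc: "B \<subseteq> carrier G" using A B subgroup.subset by auto
  show "A <#> B \<subseteq> carrier G" using Ac Bc unfolding set_mult_def by auto
  have "\<one> \<otimes> \<one> \<in> A <#> B" using subgroup.one_closed[OF A] subgroup.one_closed[OF B]
    unfolding set_mult_def by blast
  then show "A <#> B \<noteq> {}" by blast
next
  have Ac: "A \<subseteq> carrier G" and Bc: "B \<subseteq> carrier G" using A B subgroup.subset by auto
  fix x assume "x \<in> A <#> B"
  then obtain a b where ab: "a \<in> A" "b \<in> B" "x = a \<otimes> b" unfolding set_mult_def by auto
  have ac: "a \<in> carrier G" and bc: "b \<in> carrier G" using ab Ac Bc by auto
  have "inv x = (inv b \<otimes> inv a \<otimes> inv (inv b)) \<otimes> inv b"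
    using ab ac bc by (simp add: inv_mult_group m_assoc)
  moreover have "inv b \<otimes> inv a \<otimes> inv (inv b) \<in> A"
    using nor ab A B by (simp add: subgroup.m_inv_closed)
  moreover have "inv b \<in> B" using B ab by (simp add: subgroup.m_inv_closed)
  ultimately show "inv x \<in> A <#> B" unfolding set_mult_def by blast
next
  have Ac: "A \<subseteq> carrier G" and Bc: "B \<subseteq> carrier G" using A B subgroup.subset by auto
  fix x y assume "x \<in> A <#> B" "y \<in> A <#> B"
  then obtain a b a' b' where ab: "a \<in> A" "b \<in> B" "x = a \<otimes> b" "a' \<in> A" "b' \<in> B" "y = a' \<otimes> b'"
    unfolding set_mult_def by auto
  have c: "a \<in> carrier G" "b \<in> carrier G" "a' \<in> carrier G" "b' \<in> carrier G" using ab Ac Bc by auto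
  have "x \<otimes> y = (a \<otimes> (b \<otimes> a' \<otimes> inv b)) \<otimes> (b \<otimes> b')"
    using ab c by (simp add: m_assoc)
  moreover have "a \<otimes> (b \<otimes> a' \<otimes> inv b) \<in> A" using nor ab A by (simp add: subgroup.m_closed)
  moreover have "b \<otimes> b' \<in> B" using ab B by (simp add: subgroup.m_closed)
  ultimately show "x \<otimes> y \<in> A <#> B" unfolding set_mult_def by blast
qed

lemma normalD':
  assumes "normal A (G\<lparr>carrier := B\<rparr>)" "subgroup B G" "g \<in> B" "a \<in> A"
  shows "g \<otimes> a \<otimes> inv g \<in> A"
proof -
  interpret B: group "G\<lparr>carrier := B\<rparr>" using subgroup_imp_group assms(2) .
  have "\<forall>x\<in>B. \<forall>h\<in>A. x \<otimes> h \<otimes> inv\<^bsub>G\<lparr>carrier := B\<rparr>\<^esub> x \<in> A"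
    using assms(1) B.normal_inv_iff by simp
  then show ?thesis using assms m_inv_consistent[OF assms(2) assms(3)] by auto
qed

lemma normal_sub':
  assumes "normal A (G\<lparr>carrier := B\<rparr>)" shows "A \<subseteq> B"
  using normal_imp_subgroup[OF assms] subgroup.subset by fastforce

lemma pgroup_growth:
  assumes fin: "finite (carrier G)" and p: "Factorial_Ring.prime p"
    and Q: "subgroup Q G" and cQ: "card Q = p ^ n"
    and K: "subgroup K G" and KQ: "K \<subseteq> Q" and KnQ: "K \<noteq> Q"
  shows "\<exists>y\<in>Q. y \<notin> K \<and> (\<forall>k\<in>K. y \<otimes> k \<otimes> inv y \<in> K)"
proof -
  have Kc: "K \<subseteq> carrier G" and Qc: "Q \<subseteq> carrier G" using K Q subgroup.subset by auto
  have finQ: "finite Q" and finK: "finite K" using Kc Qc fin finite_subset by auto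
  define E where "E = {K #> x | x. x \<in> Q}"
  define KG where "KG = G\<lparr>carrier := K\<rparr>"
  define \<phi> where "\<phi> = (\<lambda>k. \<lambda>C\<in>E. C #> inv k)"
  have grpKG: "group KG" unfolding KG_def using subgroup_imp_group K .
  have cKG: "carrier KG = K" and mKG: "\<And>a b. a \<otimes>\<^bsub>KG\<^esub> b = a \<otimes> b" unfolding KG_def by auto
  have Esub: "\<And>C. C \<in> E \<Longrightarrow> C \<subseteq> carrier G" unfolding E_def using Kc Qc r_coset_subset_G by blast
  have phiE: "\<And>k C. k \<in> K \<Longrightarrow> C \<in> E \<Longrightarrow> C #> inv k \<in> E"
  proof -
    fix k C assume k: "k \<in> K" and C: "C \<in> E"
    then obtain x where x: "x \<in> Q" "C = K #> x" unfolding E_def by auto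
    have "C #> inv k = K #> (x \<otimes> inv k)"
      using x k Kc Qc by (simp add: coset_mult_assoc subsetD)
    moreover have "x \<otimes> inv k \<in> Q" using x k KQ Q by (auto intro: subgroup.m_closed subgroup.m_inv_closed)
    ultimately show "C #> inv k \<in> E" unfolding E_def by blast
  qed
  have bk1: "\<And>k C. k \<in> K \<Longrightarrow> C \<in> E \<Longrightarrow> C #> inv k #> k = C"
    using Esub Kc by (simp add: coset_mult_assoc subsetD)
  have bk2: "\<And>k C. k \<in> K \<Longrightarrow> C \<in> E \<Longrightarrow> C #> k #> inv k = C"
    using Esub Kc by (simp add: coset_mult_assoc subsetD)
  have phiE2: "\<And>k C. k \<in> K \<Longrightarrow> C \<in> E \<Longrightarrow> C #> k \<in> E"
  proof -
    fix k C assume k: "k \<in> K" and C: "C \<in> E"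
    have "C #> inv (inv k) \<in> E" using phiE[OF subgroup.m_inv_closed[OF K k] C] .
    then show "C #> k \<in> E" using k Kc by (simp add: subsetD)
  qed
  have bij: "\<phi> k \<in> Bij E" if k: "k \<in> K" for k
  proof -
    have "bij_betw (\<phi> k) E E"
      by (rule bij_betw_byWitness[where f'="\<lambda>C. C #> k"]) (auto simp: \<phi>_def phiE phiE2 k bk1 bk2)
    then show ?thesis unfolding Bij_def \<phi>_def by auto
  qed
  have act: "group_action KG E \<phi>"
    unfolding group_action_def group_hom_def group_hom_axioms_def
  proof (intro conjI grpKG group_BijGroup)
    show "\<phi> \<in> hom KG (BijGroup E)"
    proof (rule homI)
      fix k assume "k \<in> carrier KG" then show "\<phi> k \<in> carrier (BijGroup E)"
        using bij cKG by (simp add: BijGroup_def)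
    next
      fix k1 k2 assume k: "k1 \<in> carrier KG" "k2 \<in> carrier KG"
      then have kK: "k1 \<in> K" "k2 \<in> K" using cKG by auto
      have kc: "k1 \<in> carrier G" "k2 \<in> carrier G" using kK Kc by auto
      have "\<phi> (k1 \<otimes> k2) = compose E (\<phi> k1) (\<phi> k2)"
      proof (rule ext)
        fix C show "\<phi> (k1 \<otimes> k2) C = compose E (\<phi> k1) (\<phi> k2) C"
        proof (cases "C \<in> E")
          case True
          have "C #> inv (k1 \<otimes> k2) = C #> inv k2 #> inv k1"
            using True Esub kc by (simp add: coset_mult_assoc inv_mult_group)
          then show ?thesis using True phiE kK unfolding \<phi>_def compose_def by simp
        qed (simp add: \<phi>_def compose_def)
      qed
      then show "\<phi> (k1 \<otimes>\<^bsub>KG\<^esub> k2) = \<phi> k1 \<otimes>\<^bsub>BijGroup E\<^esub> \<phi> k2"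
        using bij kK mKG by (simp add: BijGroup_def)
    qed
  qed
  interpret A: group_action KG E \<phi> using act .
  have finE: "finite E" unfolding E_def using finQ by simp
  have cK: "card K dvd p ^ n" using card_subgroup_dvd[OF K Q KQ] cQ by simp
  then obtain m where m: "card K = p ^ m" "m \<le> n" using divides_primepow_nat[OF p] by blast
  have "card K < card Q" using KQ KnQ finQ psubset_card_mono by blast
  then have "p ^ m < p ^ n" using m cQ by simp
  then have mn: "m < n" using power_less_imp_less_exp prime_gt_1_nat[OF p] by blast
  interpret QG: group "G\<lparr>carrier := Q\<rparr>" using subgroup_imp_group Q .
  have "card (rcosets\<^bsub>G\<lparr>carrier := Q\<rparr>\<^esub> K) * card K = order (G\<lparr>carrier := Q\<rparr>)"
    using QG.lagrange subgroup_incl[OF K Q KQ] by blast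
  moreover have "rcosets\<^bsub>G\<lparr>carrier := Q\<rparr>\<^esub> K = E"
    unfolding E_def RCOSETS_def r_coset_def by auto
  ultimately have "card E * p ^ m = p ^ n" using m cQ by (simp add: order_def)
  also have "p ^ n = p ^ (n - m) * p ^ m" using mn by (simp add: power_add[symmetric])
  finally have "card E * p ^ m = p ^ (n - m) * p ^ m" .
  moreover have "p \<noteq> 0" using p prime_gt_0_nat by simp
  ultimately have "card E = p ^ (n - m)" by simp
  then have pE: "p dvd card E" using mn by simp
  define Orbs where "Orbs = orbits KG E \<phi>"
  have orb_card: "card orb = 1 \<or> p dvd card orb" if orb: "orb \<in> Orbs" for orb
  proof -
    obtain C where C: "C \<in> E" "orb = orbit KG \<phi> C" using orb unfolding Orbs_def orbits_def by auto
    have "card orb * card (stabilizer KG \<phi> C) = order KG" using A.orbit_stabilizer_theorem C by simp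
    moreover have "order KG = p ^ m" using m cKG by (simp add: order_def)
    ultimately have "card orb dvd p ^ m" by (metis dvd_triv_left)
    then obtain i where "card orb = p ^ i" using divides_primepow_nat[OF p] by blast
    then show ?thesis by (cases i) auto
  qed
  have finO: "finite Orbs" unfolding Orbs_def orbits_def using finE by simp
  have sumE: "card E = (\<Sum>orb\<in>Orbs. card orb)"
  proof -
    have "(\<Sum>orb\<in>Orbs. card orb) = (\<Sum>orb\<in>Orbs. \<Sum>x\<in>orb. (1::nat))"
      by (intro sum.cong refl card_eq_sum)
    also have "\<dots> = (\<Sum>x\<in>E. (1::nat))"
      using A.disjoint_sum[OF finE, of "\<lambda>_. 1::nat"] unfolding Orbs_def .
    also have "\<dots> = card E" by (rule card_eq_sum[symmetric])
    finally show ?thesis by simp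
  qed
  define Orb1 where "Orb1 = {orb\<in>Orbs. card orb = 1}"
  have "card E = (\<Sum>orb\<in>Orb1. card orb) + (\<Sum>orb\<in>Orbs - Orb1. card orb)"
    unfolding sumE using sum.subset_diff[of Orb1 Orbs card] finO by (simp add: Orb1_def)
  moreover have "(\<Sum>orb\<in>Orb1. card orb) = card Orb1" unfolding Orb1_def by simp
  moreover have "p dvd (\<Sum>orb\<in>Orbs - Orb1. card orb)"
    by (rule dvd_sum) (use orb_card in \<open>auto simp: Orb1_def\<close>)
  ultimately have "p dvd card Orb1 + (\<Sum>orb\<in>Orbs - Orb1. card orb)"
    and "p dvd (\<Sum>orb\<in>Orbs - Orb1. card orb)" using pE by auto
  then have pO1: "p dvd card Orb1" using dvd_add_left_iff by blast
  have KE: "K \<in> E"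
  proof -
    have "K #> \<one> = K" using Kc by simp
    then show ?thesis unfolding E_def using subgroup.one_closed[OF Q] by blast
  qed
  have orbK: "orbit KG \<phi> K = {K}"
  proof -
    have "\<phi> k K = K" if "k \<in> K" for k
      using KE that coset_join2[OF _ K] K unfolding \<phi>_def
      by (simp add: subgroup.m_inv_closed subsetD[OF Kc])
    then show ?thesis unfolding orbit_def cKG using subgroup.one_closed[OF K] by auto
  qed
  have KO1: "{K} \<in> Orb1" unfolding Orb1_def Orbs_def orbits_def using orbK KE by auto
  have finO1: "finite Orb1" using finO unfolding Orb1_def by simp
  have "card Orb1 \<noteq> 0" using KO1 finO1 by auto
  then have "p \<le> card Orb1" using pO1 dvd_imp_le by blast
  then have c2: "card Orb1 \<ge> 2" using prime_ge_2_nat[OF p] by linarith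
  have "\<not> Orb1 \<subseteq> {{K}}"
  proof
    assume "Orb1 \<subseteq> {{K}}"
    then have "card Orb1 \<le> card {{K}}" by (intro card_mono) auto
    then show False using c2 by simp
  qed
  then obtain orb where orb: "orb \<in> Orb1" "orb \<noteq> {K}" by blast
  obtain C where C: "C \<in> E" "orb = orbit KG \<phi> C" using orb unfolding Orb1_def Orbs_def orbits_def by auto
  have "C \<in> orb" using A.orbit_refl C by simp
  moreover have "card orb = 1" using orb unfolding Orb1_def by simp
  ultimately have orbC: "orb = {C}" by (metis card_1_singletonE singletonD)
  obtain x where x: "x \<in> Q" "C = K #> x" using C unfolding E_def by auto
  have xc: "x \<in> carrier G" using x Qc by auto
  have xK: "x \<notin> K" using coset_join2[OF xc K] x orb orbC by auto
  have "\<forall>k\<in>K. x \<otimes> k \<otimes> inv x \<in> K"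
  proof
    fix k assume k: "k \<in> K"
    have kc: "k \<in> carrier G" using k Kc by auto
    have ik: "inv k \<in> K" using k K by (simp add: subgroup.m_inv_closed)
    have "\<phi> (inv k) C \<in> orbit KG \<phi> C" unfolding orbit_def using ik cKG by auto
    then have "C #> inv (inv k) = C" using C orbC unfolding \<phi>_def by auto
    then have "K #> x #> k = K #> x" using x kc by simp
    moreover have "x \<otimes> k \<in> K #> x #> k"
      using subgroup.one_closed[OF K] xc kc unfolding r_coset_def by force
    ultimately have "x \<otimes> k \<in> K #> x" by simp
    then obtain h where h: "h \<in> K" "x \<otimes> k = h \<otimes> x" unfolding r_coset_def by auto
    have hc: "h \<in> carrier G" using h Kc by auto
    have "x \<otimes> k \<otimes> inv x = h" using h(2) xc kc hc by (simp add: m_assoc)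
    then show "x \<otimes> k \<otimes> inv x \<in> K" using h by simp
  qed
  then show ?thesis using x xK by blast
qed

lemma sn_pgroup:
  assumes fin: "finite (carrier G)" and p: "Factorial_Ring.prime p"
    and Q: "subgroup Q G" and cQ: "card Q = p ^ n" and A: "subgroup A G" "A \<subseteq> Q"
  shows "sn A Q"
  by (rule sn_growth[OF fin A(1) Q A(2)]) (use pgroup_growth[OF fin p Q cQ] in blast)

lemma decomp:
  assumes fin: "finite (carrier G)" and x: "x \<in> carrier G" and p: "Factorial_Ring.prime p"
  shows "\<exists>s w M. x [^] (s::nat) \<otimes> inv (x [^] (w::nat)) = x \<and> inv (x [^] w) \<otimes> x [^] s = x \<and>
     (\<exists>k. (x [^] s) [^] (p ^ k) = \<one>) \<and> (inv (x [^] w)) [^] M = \<one> \<and> \<not> p dvd M \<and>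
     M dvd ord x \<and> (p dvd ord x \<longrightarrow> M < ord x)"
proof -
  define n where "n = ord x"
  have n1: "n \<ge> 1" using ord_ge_1[OF fin x] n_def by simp
  define k where "k = multiplicity p n"
  define P where "P = p ^ k"
  define M where "M = n div P"
  have nPM: "n = P * M" unfolding M_def P_def k_def by (simp add: multiplicity_dvd)
  have pM: "\<not> p dvd M" unfolding M_def P_def k_def
    using multiplicity_decompose[of n p] n1 p prime_gt_1_nat[OF p] by auto
  have M0: "M \<noteq> 0" using nPM n1 by auto
  have cop: "coprime M P" unfolding P_def using prime_imp_coprime[OF p pM]
    by (simp add: coprime_commute)
  obtain u w where uw: "M * u = P * w + gcd M P" using bezout_nat[OF M0] by blast
  then have uw1: "M * u = P * w + 1" using cop by simp
  have a1: "x [^] (M * u) = x [^] (P * w) \<otimes> x"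
    using uw1 x by (simp add: nat_pow_mult[symmetric])
  have a2: "x [^] (M * u) = x \<otimes> x [^] (P * w)"
    using uw1 x nat_pow_mult[of x 1 "P * w"] by (simp add: add.commute)
  have e1: "x [^] (M * u) \<otimes> inv (x [^] (P * w)) = x"
    unfolding a2 using x by (simp add: m_assoc)
  have e2: "inv (x [^] (P * w)) \<otimes> x [^] (M * u) = x"
    unfolding a1 using x by (simp add: m_assoc[symmetric])
  have xn: "x [^] n = \<one>" unfolding n_def using x by simp
  have e3: "(x [^] (M * u)) [^] (p ^ k) = \<one>"
  proof -
    have "(x [^] (M * u)) [^] (p ^ k) = (x [^] n) [^] u"
      using x by (simp add: nat_pow_pow nPM P_def mult_ac)
    then show ?thesis using xn by simp
  qed
  have e4: "(inv (x [^] (P * w))) [^] M = \<one>"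
  proof -
    have "(inv (x [^] (P * w))) [^] M = inv ((x [^] n) [^] w)"
      using x by (simp add: nat_pow_inv nat_pow_pow nPM mult_ac)
    then show ?thesis using xn by simp
  qed
  have e5: "M dvd n" using nPM by simp
  have e6: "p dvd n \<longrightarrow> M < n"
  proof
    assume pn: "p dvd n"
    have "k \<noteq> 0"
    proof
      assume "k = 0" then have "n = M" using nPM P_def by simp
      then show False using pn pM by simp
    qed
    then have "p ^ 1 \<le> p ^ k" using prime_ge_2_nat[OF p] by (intro power_increasing) auto
    then have "P \<ge> 2" unfolding P_def using prime_ge_2_nat[OF p] by simp
    then have "2 * M \<le> P * M" by (rule mult_le_mono1)
    then show "M < n" using nPM M0 by linarith
  qed
  show ?thesis using e1 e2 e3 e4 pM e5 e6 unfolding n_def by blast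
qed

lemma conj_img_subgroup:
  assumes P: "subgroup P G" and g: "g \<in> carrier G"
  shows "subgroup ((\<lambda>x. g \<otimes> x \<otimes> inv g) ` P) G" (is "subgroup ?P G")
proof (rule subgroupI)
  have Pc: "P \<subseteq> carrier G" using P subgroup.subset by blast
  show "?P \<subseteq> carrier G" using Pc g by auto
  show "?P \<noteq> {}" using subgroup.one_closed[OF P] by blast
next
  have Pc: "P \<subseteq> carrier G" using P subgroup.subset by blast
  fix a assume "a \<in> ?P"
  then obtain x where x: "x \<in> P" "a = g \<otimes> x \<otimes> inv g" by auto
  have "inv a = g \<otimes> inv x \<otimes> inv g" using x Pc g by (simp add: inv_mult_group m_assoc subsetD)
  then show "inv a \<in> ?P" using x P by (auto simp: subgroup.m_inv_closed)
next
  have Pc: "P \<subseteq> carrier G" using P subgroup.subset by blast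
  fix a b assume "a \<in> ?P" "b \<in> ?P"
  then obtain x y where xy: "x \<in> P" "a = g \<otimes> x \<otimes> inv g" "y \<in> P" "b = g \<otimes> y \<otimes> inv g" by auto
  have "a \<otimes> b = g \<otimes> (x \<otimes> y) \<otimes> inv g" using xy Pc g by (simp add: m_assoc subsetD)
  then show "a \<otimes> b \<in> ?P" using xy P by (auto simp: subgroup.m_closed)
qed

lemma conj_img_card:
  assumes "P \<subseteq> carrier G" "g \<in> carrier G"
  shows "card ((\<lambda>x. g \<otimes> x \<otimes> inv g) ` P) = card P"
proof (rule card_image, rule inj_onI)
  fix x y assume "x \<in> P" "y \<in> P" "g \<otimes> x \<otimes> inv g = g \<otimes> y \<otimes> inv g"
  then show "x = y" using assms by (metis subsetD inv_closed m_closed r_cancel l_cancel)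
qed

end


locale lem36 = group +
  fixes H :: "'a set"
  assumes fin: "finite (carrier G)" and nil: "nilpotent_subgroup H G"
    and hyp: "\<And>p P. sylow_subgroup p P G \<Longrightarrow> card (H <#> P) dvd order G"
begin

lemma Hsub: "subgroup H G" using nil unfolding nilpotent_subgroup_def by blast

lemma Hc: "H \<subseteq> carrier G" using Hsub subgroup.subset by blast

definition Op :: "nat \<Rightarrow> 'a set" where
  "Op p = {x \<in> carrier G. \<forall>P. sylow_subgroup p P G \<longrightarrow> x \<in> P}"

lemma sylow_exists:
  assumes p: "Factorial_Ring.prime p" shows "\<exists>P. sylow_subgroup p P G"
proof -
  let ?a = "multiplicity p (order G)"
  have "p ^ ?a dvd order G" by (rule multiplicity_dvd)
  then obtain m where "order G = p ^ ?a * m" by (auto elim: dvdE)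
  then obtain P where "subgroup P G" "card P = p ^ ?a" using sylow_thm[OF p is_group _ fin] by blast
  then show ?thesis using p unfolding sylow_subgroup_def by blast
qed

lemma sylow_conj:
  assumes "sylow_subgroup p P G" "g \<in> carrier G"
  shows "sylow_subgroup p ((\<lambda>x. g \<otimes> x \<otimes> inv g) ` P) G"
  using assms conj_img_subgroup conj_img_card subgroup.subset unfolding sylow_subgroup_def
  by metis

lemma Op_subgroup:
  assumes p: "Factorial_Ring.prime p" shows "subgroup (Op p) G"
proof (rule subgroupI)
  show "Op p \<subseteq> carrier G" unfolding Op_def by auto
  have "\<one> \<in> Op p" unfolding Op_def sylow_subgroup_def by (auto simp: subgroup.one_closed)
  then show "Op p \<noteq> {}" by blast
next
  fix x assume "x \<in> Op p" then show "inv x \<in> Op p"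
    unfolding Op_def sylow_subgroup_def by (auto simp: subgroup.m_inv_closed)
next
  fix x y assume "x \<in> Op p" "y \<in> Op p" then show "x \<otimes> y \<in> Op p"
    unfolding Op_def sylow_subgroup_def by (auto simp: subgroup.m_closed)
qed

lemma Op_conj:
  assumes g: "g \<in> carrier G" and x: "x \<in> Op p"
  shows "g \<otimes> x \<otimes> inv g \<in> Op p"
proof -
  have xc: "x \<in> carrier G" using x unfolding Op_def by auto
  have "g \<otimes> x \<otimes> inv g \<in> P" if P: "sylow_subgroup p P G" for P
  proof -
    have ig: "inv g \<in> carrier G" using g by simp
    have "sylow_subgroup p ((\<lambda>z. inv g \<otimes> z \<otimes> inv (inv g)) ` P) G" by (rule sylow_conj[OF P ig])
    then have "x \<in> (\<lambda>z. inv g \<otimes> z \<otimes> inv (inv g)) ` P" using x unfolding Op_def by auto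
    then obtain y where y: "y \<in> P" "x = inv g \<otimes> y \<otimes> g" using g by auto
    have yc: "y \<in> carrier G" using y P subgroup.subset unfolding sylow_subgroup_def by blast
    have "g \<otimes> x \<otimes> inv g = y" using y g yc by (simp add: m_assoc)
    then show ?thesis using y by simp
  qed
  then show ?thesis unfolding Op_def using g xc by auto
qed

lemma Op_pow:
  assumes p: "Factorial_Ring.prime p"
  shows "\<exists>b. card (Op p) = p ^ b \<and> (\<forall>x\<in>Op p. x [^] (p ^ b) = \<one>)"
proof -
  obtain P where P: "sylow_subgroup p P G" using sylow_exists[OF p] by blast
  have PG: "subgroup P G" and cP: "card P = p ^ multiplicity p (order G)"
    using P unfolding sylow_subgroup_def by auto
  have "Op p \<subseteq> P" using P unfolding Op_def by auto
  then have "card (Op p) dvd card P" using card_subgroup_dvd[OF Op_subgroup[OF p] PG] by blast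
  then obtain b where b: "card (Op p) = p ^ b" using cP divides_primepow_nat[OF p] by auto
  then show ?thesis using pow_card_subgroup[OF fin Op_subgroup[OF p]] by auto
qed

lemma Op_inter:
  assumes p: "Factorial_Ring.prime p" and q: "Factorial_Ring.prime q" and pq: "p \<noteq> q"
    and x: "x \<in> Op p" "x \<in> Op q"
  shows "x = \<one>"
proof -
  have xc: "x \<in> carrier G" using x unfolding Op_def by auto
  obtain b where b: "x [^] (p ^ b) = \<one>" using Op_pow[OF p] x by blast
  obtain c where c: "x [^] (q ^ c) = \<one>" using Op_pow[OF q] x by blast
  have "ord x dvd p ^ b" "ord x dvd q ^ c" using b c pow_eq_id[OF xc] by auto
  moreover have "coprime (p ^ b) (q ^ c)" using primes_coprime[OF p q pq] by simp
  ultimately have "ord x = 1" using coprime_common_divisor_nat by blast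
  then show ?thesis using ord_eq_1[OF xc] by simp
qed

lemma Op_comm:
  assumes p: "Factorial_Ring.prime p" and q: "Factorial_Ring.prime q" and pq: "p \<noteq> q"
    and x: "x \<in> Op p" and y: "y \<in> Op q"
  shows "x \<otimes> y = y \<otimes> x"
proof -
  have xc: "x \<in> carrier G" and yc: "y \<in> carrier G" using x y unfolding Op_def by auto
  let ?c = "x \<otimes> y \<otimes> inv x \<otimes> inv y"
  have "?c = (x \<otimes> y \<otimes> inv x) \<otimes> inv y" by simp
  moreover have "x \<otimes> y \<otimes> inv x \<in> Op q" using Op_conj[OF xc y] .
  ultimately have c1: "?c \<in> Op q" using subgroup.m_closed[OF Op_subgroup[OF q]]
    subgroup.m_inv_closed[OF Op_subgroup[OF q] y] by simp
  have "?c = x \<otimes> (y \<otimes> inv x \<otimes> inv y)" using xc yc by (simp add: m_assoc)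
  moreover have "y \<otimes> inv x \<otimes> inv y \<in> Op p"
    using Op_conj[OF yc subgroup.m_inv_closed[OF Op_subgroup[OF p] x]] .
  ultimately have c2: "?c \<in> Op p" using subgroup.m_closed[OF Op_subgroup[OF p] x] by simp
  have "?c = \<one>" using Op_inter[OF p q pq c2 c1] .
  then have "x \<otimes> y \<otimes> inv x \<otimes> inv y \<otimes> (y \<otimes> x) = y \<otimes> x" using xc yc by simp
  then show ?thesis using xc yc by (simp add: m_assoc)
qed

lemma chain_mono:
  assumes nor: "\<forall>i<r. normal (K i) (G\<lparr>carrier := K (Suc i)\<rparr>)" and ij: "i \<le> j" and jr: "j \<le> r"
  shows "K i \<subseteq> K j"
  using ij jr
proof (induction j rule: dec_induct)
  case base then show ?case by simp
next
  case (step n)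
  have "K n \<subseteq> K (Suc n)" using nor step normal_sub' by auto
  then show ?case using step by auto
qed

lemma pel_in_S:
  assumes p: "Factorial_Ring.prime p" and S: "subgroup S G" and cS: "card S = p ^ b"
    and MAX: "\<And>T c. subgroup T G \<Longrightarrow> T \<subseteq> H \<Longrightarrow> S \<subseteq> T \<Longrightarrow> card T = p ^ c \<Longrightarrow> T = S"
    and K: "subgroup K G" "S \<subseteq> K" "K \<subseteq> H" and nor: "\<forall>g\<in>K. \<forall>s\<in>S. g \<otimes> s \<otimes> inv g \<in> S"
    and y: "y \<in> K" "y [^] (p ^ k) = \<one>"
  shows "y \<in> S"
proof -
  have Kc: "K \<subseteq> carrier G" using K subgroup.subset by blast
  have yc: "y \<in> carrier G" using y Kc by auto
  define Y where "Y = generate G {y}"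
  have subY: "subgroup Y G" unfolding Y_def using generate_is_subgroup yc by auto
  have YK: "Y \<subseteq> K" unfolding Y_def using generate_subgroup_incl K y by auto
  have "card Y dvd p ^ k" unfolding Y_def using generate_pow_card[OF yc] pow_eq_id[OF yc] y by simp
  then obtain e where cY: "card Y = p ^ e" using divides_primepow_nat[OF p] by blast
  define T where "T = S <#> Y"
  have subT: "subgroup T G" unfolding T_def
    by (rule subgroup_set_mult_norm[OF S subY]) (use nor YK in blast)
  have TK: "T \<subseteq> K" unfolding T_def set_mult_def using K YK subgroup.m_closed[OF K(1)] by blast
  have ST: "S \<subseteq> T"
  proof
    fix s assume s: "s \<in> S"
    then have "s = s \<otimes> \<one>" using S subgroup.subset by (metis r_one subsetD)
    then show "s \<in> T" unfolding T_def set_mult_def using s subgroup.one_closed[OF subY] by blast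
  qed
  have "card T * card (S \<inter> Y) = p ^ b * p ^ e" using card_set_mult[OF fin S subY] cS cY T_def by simp
  then have "card T dvd p ^ (b + e)" by (metis dvd_triv_left power_add)
  then obtain c where "card T = p ^ c" using divides_primepow_nat[OF p] by blast
  then have "T = S" using MAX[OF subT _ ST] TK K by blast
  moreover have "y \<in> T" unfolding T_def set_mult_def Y_def
    using subgroup.one_closed[OF S] generate.incl[of y "{y}" G] yc by force
  ultimately show ?thesis by simp
qed

lemma Hp_in_Op:
  assumes p: "Factorial_Ring.prime p" and x: "x \<in> H" and xk: "x [^] (p ^ k) = \<one>"
  shows "x \<in> Op p"
proof -
  have "x \<in> P" if P: "sylow_subgroup p P G" for P
  proof -
    define a where "a = multiplicity p (order G)"
    have PG: "subgroup P G" and cP: "card P = p ^ a" using P unfolding sylow_subgroup_def a_def by auto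
    define S where "S = H \<inter> P"
    have subS: "subgroup S G" unfolding S_def using subgroups_Inter_pair[OF Hsub PG] .
    have SH: "S \<subseteq> H" unfolding S_def by auto
    have "card S dvd card P" using card_subgroup_dvd[OF subS PG] S_def by auto
    then obtain b where cS: "card S = p ^ b" using cP divides_primepow_nat[OF p] by auto
    have prod: "card (H <#> P) * p ^ b = card H * p ^ a"
      using card_set_mult[OF fin Hsub PG] cS cP S_def by simp
    have hd: "card (H <#> P) dvd order G" using hyp[OF P] .
    define m where "m = order G div p ^ a"
    have om: "order G = p ^ a * m" unfolding m_def a_def by (simp add: multiplicity_dvd)
    have oG: "order G \<noteq> 0" using fin by (simp add: order_gt_0_iff_finite[symmetric])
    have pm: "\<not> p dvd m" unfolding m_def a_def
      using multiplicity_decompose[OF oG] p prime_gt_1_nat[OF p] by auto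
    have pa0: "0 < p ^ a" using p prime_gt_0_nat by simp
    have MAX: "T = S" if T: "subgroup T G" "T \<subseteq> H" "S \<subseteq> T" "card T = p ^ c" for T c
    proof -
      have "card T dvd card H" using card_subgroup_dvd[OF T(1) Hsub T(2)] .
      then have "p ^ a * p ^ c dvd card H * p ^ a" using T(4) by (simp add: mult.commute)
      also have "\<dots> = card (H <#> P) * p ^ b" using prod by simp
      also have "\<dots> dvd order G * p ^ b" using hd by simp
      also have "\<dots> = p ^ a * (m * p ^ b)" using om by simp
      finally have "p ^ c dvd m * p ^ b" using pa0 p prime_gt_0_nat[OF p] by (simp add: nat_mult_dvd_cancel1)
      moreover have "coprime (p ^ c) m" using prime_imp_coprime[OF p pm] by simp
      ultimately have "p ^ c dvd p ^ b" using coprime_dvd_mult_right_iff by blast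
      then have "card T \<le> card S" using T(4) cS p prime_gt_0_nat by (simp add: dvd_imp_le)
      moreover have "finite T" using T(1) fin subgroup.subset finite_subset by blast
      ultimately show "T = S" using card_seteq[OF _ T(3)] by blast
    qed
    have "sn S H" using sn_nil[OF fin nil subS SH] .
    then obtain r K where K: "K 0 = S" "K r = H" "\<forall>i\<le>r. subgroup (K i) G"
      "\<forall>i<r. normal (K i) (G\<lparr>carrier := K (Suc i)\<rparr>)" unfolding sn_def by blast
    have inv: "i \<le> r \<longrightarrow> (\<forall>g\<in>K i. \<forall>s\<in>S. g \<otimes> s \<otimes> inv g \<in> S) \<and>
        (\<forall>y\<in>K i. (\<exists>k. y [^] (p ^ k) = \<one>) \<longrightarrow> y \<in> S)" for i
    proof (induction i)
      case 0 show ?case using K(1) subS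
        by (auto intro!: subgroup.m_closed subgroup.m_inv_closed)
    next
      case (Suc i)
      show ?case
      proof
        assume ir: "Suc i \<le> r"
        have subKS: "subgroup (K (Suc i)) G" using K ir by auto
        have KSH: "K (Suc i) \<subseteq> H" using chain_mono[OF K(4) ir order.refl] K(2) by simp
        have SKS: "S \<subseteq> K (Suc i)" using chain_mono[OF K(4) _ ir, of 0] K(1) by simp
        have SKi: "S \<subseteq> K i" using chain_mono[OF K(4) _, of 0 i] K(1) ir by simp
        have IH1: "\<forall>y\<in>K i. (\<exists>k. y [^] (p ^ k) = \<one>) \<longrightarrow> y \<in> S" using Suc ir by simp
        have c1: "\<forall>g\<in>K (Suc i). \<forall>s\<in>S. g \<otimes> s \<otimes> inv g \<in> S"
        proof (intro ballI)
          fix g s assume g: "g \<in> K (Suc i)" and s: "s \<in> S"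
          have gc: "g \<in> carrier G" using g subKS subgroup.subset by blast
          have sc: "s \<in> carrier G" using s subS subgroup.subset by blast
          have "g \<otimes> s \<otimes> inv g \<in> K i" using normalD'[OF _ subKS g] K(4) ir s SKi by auto
          moreover have "(g \<otimes> s \<otimes> inv g) [^] (p ^ b) = \<one>"
            using conj_pow[OF gc sc] pow_card_subgroup[OF fin subS s] cS gc by simp
          ultimately show "g \<otimes> s \<otimes> inv g \<in> S" using IH1 by blast
        qed
        moreover have "\<forall>y\<in>K (Suc i). (\<exists>k. y [^] (p ^ k) = \<one>) \<longrightarrow> y \<in> S"
        proof (intro ballI impI)
          fix y assume "y \<in> K (Suc i)" "\<exists>k. y [^] (p ^ k) = \<one>"
          then obtain k where "y \<in> K (Suc i)" "y [^] (p ^ k) = \<one>" by blast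
          then show "y \<in> S" using pel_in_S[OF p subS cS _ subKS SKS KSH c1] MAX by blast
        qed
        ultimately show "(\<forall>g\<in>K (Suc i). \<forall>s\<in>S. g \<otimes> s \<otimes> inv g \<in> S) \<and>
          (\<forall>y\<in>K (Suc i). (\<exists>k. y [^] (p ^ k) = \<one>) \<longrightarrow> y \<in> S)" by blast
      qed
    qed
    have "x \<in> S" using inv[of r] K(2) x xk by blast
    then show ?thesis unfolding S_def by simp
  qed
  then show ?thesis unfolding Op_def using x Hc by auto
qed

lemma H_pow_inv: "x \<in> H \<Longrightarrow> inv (x [^] (w::nat)) \<in> H"
  using sub_pow_closed[OF Hsub] subgroup.m_inv_closed[OF Hsub] by blast

lemma cent:
  assumes q: "Factorial_Ring.prime q"
  shows "x \<in> H \<Longrightarrow> \<not> q dvd ord x \<Longrightarrow> y \<in> Op q \<Longrightarrow> x \<otimes> y = y \<otimes> x"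
proof (induction "ord x" arbitrary: x rule: less_induct)
  case less
  have xc: "x \<in> carrier G" using less Hc by auto
  have yc: "y \<in> carrier G" using less unfolding Op_def by auto
  show ?case
  proof (cases "ord x = 1")
    case True then show ?thesis using ord_eq_1[OF xc] yc by simp
  next
    case False
    obtain p where p: "Factorial_Ring.prime p" "p dvd ord x" using prime_factor_nat[OF False] by blast
    have pq: "p \<noteq> q" using p less by auto
    obtain s w M where d: "x [^] (s::nat) \<otimes> inv (x [^] (w::nat)) = x"
      "\<exists>k. (x [^] s) [^] (p ^ k) = \<one>" "(inv (x [^] w)) [^] M = \<one>"
      "M dvd ord x" "p dvd ord x \<longrightarrow> M < ord x"
      using decomp[OF fin xc p(1)] by blast
    define a where "a = x [^] s"
    define b where "b = inv (x [^] w)"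
    have aH: "a \<in> H" unfolding a_def using sub_pow_closed[OF Hsub less(2)] .
    have bH: "b \<in> H" unfolding b_def using H_pow_inv[OF less(2)] .
    have ac: "a \<in> carrier G" and bc: "b \<in> carrier G" using aH bH Hc by auto
    have aOp: "a \<in> Op p" using d(2) Hp_in_Op[OF p(1) aH] unfolding a_def by blast
    have ay: "a \<otimes> y = y \<otimes> a" using Op_comm[OF p(1) q pq aOp less(4)] .
    have "ord b dvd M" using d(3) pow_eq_id[OF bc] unfolding b_def by simp
    moreover have M0: "M \<noteq> 0" using d(4) ord_ge_1[OF fin xc] by auto
    ultimately have "ord b \<le> M" using dvd_imp_le by blast
    moreover have "M < ord x" using d(5) p(2) by blast
    ultimately have "ord b < ord x" by linarith
    moreover have "\<not> q dvd ord b" using \<open>ord b dvd M\<close> d(4) less(3) dvd_trans by metis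
    ultimately have by': "b \<otimes> y = y \<otimes> b" using less(1) bH less(4) by blast
    have "x \<otimes> y = a \<otimes> (b \<otimes> y)" using d(1) ac bc yc unfolding a_def b_def by (metis m_assoc)
    also have "\<dots> = (a \<otimes> y) \<otimes> b" using by' ac bc yc by (simp add: m_assoc)
    also have "\<dots> = y \<otimes> (a \<otimes> b)" using ay ac bc yc by (simp add: m_assoc)
    also have "\<dots> = y \<otimes> x" using d(1) unfolding a_def b_def by simp
    finally show ?thesis .
  qed
qed

lemma dec_q:
  assumes q: "Factorial_Ring.prime q" and h: "h \<in> H"
  shows "\<exists>a b. h = a \<otimes> b \<and> a \<in> H \<and> a \<in> Op q \<and> b \<in> H \<and> (\<forall>y\<in>Op q. b \<otimes> y = y \<otimes> b)"
proof -
  have hc: "h \<in> carrier G" using h Hc by auto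
  obtain s w M where d: "h [^] (s::nat) \<otimes> inv (h [^] (w::nat)) = h"
      "\<exists>k. (h [^] s) [^] (q ^ k) = \<one>" "(inv (h [^] w)) [^] M = \<one>" "\<not> q dvd M"
      using decomp[OF fin hc q] by blast
  define a where "a = h [^] s"
  define b where "b = inv (h [^] w)"
  have aH: "a \<in> H" unfolding a_def using sub_pow_closed[OF Hsub h] .
  have bH: "b \<in> H" unfolding b_def using H_pow_inv[OF h] .
  have bc: "b \<in> carrier G" using bH Hc by auto
  have aOp: "a \<in> Op q" using d(2) Hp_in_Op[OF q aH] unfolding a_def by blast
  have "ord b dvd M" using d(3) pow_eq_id[OF bc] unfolding b_def by simp
  then have "\<not> q dvd ord b" using d(4) dvd_trans by blast
  then have "\<forall>y\<in>Op q. b \<otimes> y = y \<otimes> b" using cent[OF q bH] by blast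
  then show ?thesis using d(1) aH bH aOp unfolding a_def b_def by metis
qed

definition Pr :: "nat set" where "Pr = {p. Factorial_Ring.prime p \<and> p \<le> order G}"

lemma H_in_gen: "x \<in> H \<Longrightarrow> x \<in> generate G (\<Union>p\<in>Pr. Op p)"
proof (induction "ord x" arbitrary: x rule: less_induct)
  case less
  have xc: "x \<in> carrier G" using less Hc by auto
  show ?case
  proof (cases "ord x = 1")
    case True then show ?thesis using ord_eq_1[OF xc] generate.one by simp
  next
    case False
    obtain p where p: "Factorial_Ring.prime p" "p dvd ord x" using prime_factor_nat[OF False] by blast
    have "p \<le> ord x" using p(2) ord_ge_1[OF fin xc] dvd_imp_le by auto
    then have pPr: "p \<in> Pr" unfolding Pr_def using p ord_le_group_order[OF fin xc] by auto
    obtain s w M where d: "x [^] (s::nat) \<otimes> inv (x [^] (w::nat)) = x"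
      "\<exists>k. (x [^] s) [^] (p ^ k) = \<one>" "(inv (x [^] w)) [^] M = \<one>"
      "M dvd ord x" "p dvd ord x \<longrightarrow> M < ord x"
      using decomp[OF fin xc p(1)] by blast
    define a where "a = x [^] s"
    define b where "b = inv (x [^] w)"
    have aH: "a \<in> H" unfolding a_def using sub_pow_closed[OF Hsub less(2)] .
    have bH: "b \<in> H" unfolding b_def using H_pow_inv[OF less(2)] .
    have bc: "b \<in> carrier G" using bH Hc by auto
    have aOp: "a \<in> Op p" using d(2) Hp_in_Op[OF p(1) aH] unfolding a_def by blast
    have "ord b dvd M" using d(3) pow_eq_id[OF bc] unfolding b_def by simp
    moreover have M0: "M \<noteq> 0" using d(4) ord_ge_1[OF fin xc] by auto
    ultimately have "ord b \<le> M" using dvd_imp_le by blast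
    moreover have "M < ord x" using d(5) p(2) by blast
    ultimately have "ord b < ord x" by linarith
    then have "b \<in> generate G (\<Union>p\<in>Pr. Op p)" using less(1) bH by blast
    moreover have "a \<in> generate G (\<Union>p\<in>Pr. Op p)" using aOp pPr by (blast intro: generate.incl)
    ultimately have "a \<otimes> b \<in> generate G (\<Union>p\<in>Pr. Op p)" by (rule generate.eng[rotated])
    then show ?thesis using d(1) unfolding a_def b_def by simp
  qed
qed

lemma conj_mult':
  "g \<in> carrier G \<Longrightarrow> a \<in> carrier G \<Longrightarrow> b \<in> carrier G \<Longrightarrow>
    g \<otimes> (a \<otimes> b) \<otimes> inv g = (g \<otimes> a \<otimes> inv g) \<otimes> (g \<otimes> b \<otimes> inv g)"
  by (simp add: m_assoc)

lemma conj_comm': "b \<in> carrier G \<Longrightarrow> x \<in> carrier G \<Longrightarrow> b \<otimes> x = x \<otimes> b \<Longrightarrow> b \<otimes> x \<otimes> inv b = x"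
  by (simp add: m_assoc)

lemma stage:
  assumes q: "Factorial_Ring.prime q" and pi: "\<pi> \<subseteq> {p. Factorial_Ring.prime p}"
  shows "sn (generate G (H \<union> (\<Union>p\<in>\<pi>. Op p))) (generate G (H \<union> (\<Union>p\<in>\<pi>. Op p) \<union> Op q))"
proof -
  define U where "U = (\<Union>p\<in>\<pi>. Op p)"
  have Uc: "U \<subseteq> carrier G" unfolding U_def Op_def by auto
  define Hq where "Hq = H \<inter> Op q"
  have subHq: "subgroup Hq G" unfolding Hq_def using subgroups_Inter_pair[OF Hsub Op_subgroup[OF q]] .
  obtain b where cOp: "card (Op q) = q ^ b" using Op_pow[OF q] by blast
  have "sn Hq (Op q)" using sn_pgroup[OF fin q Op_subgroup[OF q] cOp subHq] Hq_def by blast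
  then obtain r C where C: "C 0 = Hq" "C r = Op q" "\<forall>i\<le>r. subgroup (C i) G"
      "\<forall>i<r. normal (C i) (G\<lparr>carrier := C (Suc i)\<rparr>)" unfolding sn_def by blast
  have CHq: "Hq \<subseteq> C i" if "i \<le> r" for i using chain_mono[OF C(4) _ that, of 0] C(1) by simp
  have COp: "C i \<subseteq> Op q" if "i \<le> r" for i using chain_mono[OF C(4) that order.refl] C(2) by simp
  have Cc: "C i \<subseteq> carrier G" if "i \<le> r" for i using COp[OF that] unfolding Op_def by auto
  define N where "N = (\<lambda>i. generate G (H \<union> U \<union> C i))"
  have Xc: "H \<union> U \<union> C i \<subseteq> carrier G" if "i \<le> r" for i using Hc Uc Cc[OF that] by auto
  have subN: "subgroup (N i) G" if "i \<le> r" for i unfolding N_def using generate_is_subgroup[OF Xc[OF that]] .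
  have gen: "g \<otimes> x \<otimes> inv g \<in> generate G (H \<union> U \<union> C i)"
    if i: "i < r" and g: "g \<in> H \<union> U \<union> C (Suc i)" and x: "x \<in> H \<union> U \<union> C i" for i g x
  proof -
    let ?X = "H \<union> U \<union> C i"
    have ir: "i \<le> r" "Suc i \<le> r" using i by auto
    have gc: "g \<in> carrier G" using g Xc[OF ir(2)] by auto
    have xc: "x \<in> carrier G" using x Xc[OF ir(1)] by auto
    have inc: "\<And>z. z \<in> ?X \<Longrightarrow> z \<in> generate G ?X" by (rule generate.incl)
    have prod: "\<And>z1 z2. z1 \<in> ?X \<Longrightarrow> z2 \<in> ?X \<Longrightarrow> z1 \<otimes> z2 \<in> generate G ?X"
      by (rule generate.eng) (auto intro: generate.incl)
    have subCi: "subgroup (C i) G" using C(3) ir by auto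
    have subCS: "subgroup (C (Suc i)) G" using C(3) ir by auto
    have norCi: "normal (C i) (G\<lparr>carrier := C (Suc i)\<rparr>)" using C(4) i by auto
    consider (gU) "g \<in> U" | (gH) "g \<in> H" | (gC) "g \<in> C (Suc i)" using g by blast
    then show ?thesis
    proof cases
      case gU
      then obtain p where p: "p \<in> \<pi>" "g \<in> Op p" unfolding U_def by blast
      have pp: "Factorial_Ring.prime p" using p pi by auto
      have "x \<otimes> inv g \<otimes> inv x \<in> Op p"
        using Op_conj[OF xc subgroup.m_inv_closed[OF Op_subgroup[OF pp] p(2)]] by simp
      then have "g \<otimes> (x \<otimes> inv g \<otimes> inv x) \<in> Op p" using subgroup.m_closed[OF Op_subgroup[OF pp] p(2)] by blast
      then have c: "g \<otimes> (x \<otimes> inv g \<otimes> inv x) \<in> ?X" using p unfolding U_def by blast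
      have "g \<otimes> x \<otimes> inv g = g \<otimes> (x \<otimes> inv g \<otimes> inv x) \<otimes> x" using gc xc by (simp add: m_assoc)
      then show ?thesis using prod[OF c x] by simp
    next
      case gH
      consider (xH) "x \<in> H" | (xU) "x \<in> U" | (xC) "x \<in> C i" using x by blast
      then show ?thesis
      proof cases
        case xH then show ?thesis
          using gH subgroup.m_closed[OF Hsub] subgroup.m_inv_closed[OF Hsub] inc by blast
      next
        case xU
        then obtain p where "p \<in> \<pi>" "x \<in> Op p" unfolding U_def by blast
        then have "g \<otimes> x \<otimes> inv g \<in> U" using Op_conj[OF gc] unfolding U_def by blast
        then show ?thesis using inc by blast
      next
        case xC
        obtain a b where ab: "g = a \<otimes> b" "a \<in> H" "a \<in> Op q" "b \<in> H" "\<forall>y\<in>Op q. b \<otimes> y = y \<otimes> b"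
          using dec_q[OF q gH] by blast
        have ac: "a \<in> carrier G" and bc: "b \<in> carrier G" using ab Hc by auto
        have aC: "a \<in> C i" using CHq[OF ir(1)] ab unfolding Hq_def by blast
        have bx: "b \<otimes> x \<otimes> inv b = x" using conj_comm'[OF bc xc] ab(5) COp[OF ir(1)] xC by blast
        have "g \<otimes> x \<otimes> inv g = a \<otimes> (b \<otimes> x \<otimes> inv b) \<otimes> inv a"
          using ab(1) ac bc xc by (simp add: m_assoc inv_mult_group)
        also have "\<dots> = a \<otimes> x \<otimes> inv a" using bx by simp
        finally have "g \<otimes> x \<otimes> inv g \<in> C i"
          using aC xC subCi by (simp add: subgroup.m_closed subgroup.m_inv_closed)
        then show ?thesis using inc by blast
      qed
    next
      case gC
      have gOp: "g \<in> Op q" using gC COp[OF ir(2)] by blast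
      consider (xH) "x \<in> H" | (xU) "x \<in> U" | (xC) "x \<in> C i" using x by blast
      then show ?thesis
      proof cases
        case xH
        obtain a b where ab: "x = a \<otimes> b" "a \<in> H" "a \<in> Op q" "b \<in> H" "\<forall>y\<in>Op q. b \<otimes> y = y \<otimes> b"
          using dec_q[OF q xH] by blast
        have ac: "a \<in> carrier G" and bc: "b \<in> carrier G" using ab Hc by auto
        have aC: "a \<in> C i" using CHq[OF ir(1)] ab unfolding Hq_def by blast
        have gb: "g \<otimes> b \<otimes> inv g = b" using ab(5) gOp conj_comm'[OF gc bc] by metis
        have "g \<otimes> x \<otimes> inv g = (g \<otimes> a \<otimes> inv g) \<otimes> (g \<otimes> b \<otimes> inv g)"
          using ab(1) conj_mult'[OF gc ac bc] by simp
        also have "\<dots> = (g \<otimes> a \<otimes> inv g) \<otimes> b" using gb by simp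
        finally have e: "g \<otimes> x \<otimes> inv g = (g \<otimes> a \<otimes> inv g) \<otimes> b" .
        have "g \<otimes> a \<otimes> inv g \<in> C i" using normalD'[OF norCi subCS gC aC] .
        then show ?thesis unfolding e using prod ab(4) by blast
      next
        case xU
        then obtain p where "p \<in> \<pi>" "x \<in> Op p" unfolding U_def by blast
        then have "g \<otimes> x \<otimes> inv g \<in> U" using Op_conj[OF gc] unfolding U_def by blast
        then show ?thesis using inc by blast
      next
        case xC
        have "g \<otimes> x \<otimes> inv g \<in> C i" using normalD'[OF norCi subCS gC xC] .
        then show ?thesis using inc by blast
      qed
    qed
  qed
  show ?thesis unfolding sn_def
  proof (intro exI[of _ r] exI[of _ N] conjI allI impI)
    have "H \<union> U \<union> C 0 = H \<union> U" using C(1) unfolding Hq_def by auto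
    then show "N 0 = generate G (H \<union> (\<Union>p\<in>\<pi>. Op p))" unfolding N_def U_def by simp
    show "N r = generate G (H \<union> (\<Union>p\<in>\<pi>. Op p) \<union> Op q)" unfolding N_def U_def C(2) ..
  next
    fix i assume "i \<le> r" then show "subgroup (N i) G" by (rule subN)
  next
    fix i assume i: "i < r"
    have "C i \<subseteq> C (Suc i)" using chain_mono[OF C(4), of i "Suc i"] i by simp
    then have NN: "N i \<subseteq> N (Suc i)" unfolding N_def by (intro mono_generate) auto
    show "normal (N i) (G\<lparr>carrier := N (Suc i)\<rparr>)"
    proof (rule normalI'[OF subN subN NN])
      fix g a assume "g \<in> N (Suc i)" "a \<in> N i"
      show "g \<otimes> a \<otimes> inv g \<in> N i"
      proof -
        have X1: "H \<union> U \<union> C i \<subseteq> carrier G" using Xc i by auto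
        have X2: "H \<union> U \<union> C (Suc i) \<subseteq> carrier G" using Xc i by auto
        show ?thesis using norm_gen[OF fin X1 X2 gen[OF i]] \<open>g \<in> N (Suc i)\<close> \<open>a \<in> N i\<close>
          unfolding N_def by blast
      qed
    qed (use i in auto)
  qed
qed

lemma pi_sn:
  assumes "finite \<pi>" "\<pi> \<subseteq> Pr"
  shows "sn H (generate G (H \<union> (\<Union>p\<in>\<pi>. Op p)))"
  using assms
proof (induction \<pi> rule: finite_induct)
  case empty
  have "generate G H = H"
    using generate_subgroup_incl[OF order.refl Hsub] generate.incl[of _ H G] by blast
  then show ?case using sn_refl[OF Hsub] by simp
next
  case (insert q F)
  have q: "Factorial_Ring.prime q" using insert unfolding Pr_def by auto
  have F: "F \<subseteq> {p. Factorial_Ring.prime p}" using insert unfolding Pr_def by auto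
  have "sn H (generate G (H \<union> (\<Union>p\<in>F. Op p)))" using insert by auto
  moreover have "sn (generate G (H \<union> (\<Union>p\<in>F. Op p))) (generate G (H \<union> (\<Union>p\<in>F. Op p) \<union> Op q))"
    using stage[OF q F] .
  moreover have "H \<union> (\<Union>p\<in>F. Op p) \<union> Op q = H \<union> (\<Union>p\<in>insert q F. Op p)" by auto
  ultimately show ?case using sn_trans[of H "generate G (H \<union> (\<Union>p\<in>F. Op p))"] by simp
qed

lemma main: "sn H (carrier G)"
proof -
  have finPr: "finite Pr" unfolding Pr_def by (rule finite_subset[of _ "{..order G}"]) auto
  define V where "V = (\<Union>p\<in>Pr. Op p)"
  define W where "W = generate G (H \<union> V)"
  have Vc: "V \<subseteq> carrier G" unfolding V_def Op_def by auto
  have Xc: "H \<union> V \<subseteq> carrier G" using Hc Vc by auto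
  have subW: "subgroup W G" unfolding W_def using generate_is_subgroup[OF Xc] .
  have snW: "sn H W" unfolding W_def V_def using pi_sn[OF finPr order.refl] .
  have cc: "carrier G \<subseteq> carrier G" by simp
  have genV: "g \<otimes> x \<otimes> inv g \<in> generate G V" if gx: "g \<in> carrier G" "x \<in> V" for g x
  proof -
    obtain p where "p \<in> Pr" "x \<in> Op p" using gx(2) unfolding V_def by blast
    then have "g \<otimes> x \<otimes> inv g \<in> V" using Op_conj[OF gx(1)] unfolding V_def by blast
    then show ?thesis by (rule generate.incl)
  qed
  have conjW: "g \<otimes> x \<otimes> inv g \<in> generate G (H \<union> V)" if g: "g \<in> carrier G" and x: "x \<in> H \<union> V" for g x
  proof (cases "x \<in> V")
    case True then show ?thesis using genV[OF g True] mono_generate[of V "H \<union> V"] by blast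
  next
    case False
    then have "x \<in> H" using x by blast
    then have "x \<in> generate G V" using H_in_gen unfolding V_def by blast
    then have "g \<otimes> x \<otimes> inv g \<in> generate G V"
      using norm_gen[OF fin Vc cc genV] g generate.incl[of g "carrier G" G] by blast
    then show ?thesis using mono_generate[of V "H \<union> V"] by blast
  qed
  have norW: "normal W (G\<lparr>carrier := carrier G\<rparr>)"
  proof (rule normalI'[OF subW subgroup_self])
    show "W \<subseteq> carrier G" using subW subgroup.subset by blast
    fix g a assume "g \<in> carrier G" "a \<in> W"
    then show "g \<otimes> a \<otimes> inv g \<in> W"
      unfolding W_def using norm_gen[OF fin Xc cc conjW] generate.incl[of g "carrier G" G] by blast
  qed
  have "sn W (carrier G)" using sn_cons[OF subW norW sn_refl[OF subgroup_self]] .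
  then show ?thesis using sn_trans snW by blast
qed

end

theorem lemma3p6:
  fixes G (structure) and H :: "'a set"
  assumes "group G" and "finite (carrier G)"
    and "nilpotent_subgroup H G"
    and "\<And>p P. sylow_subgroup p P G \<Longrightarrow> card (H <#> P) dvd order G"
  shows "subnormal H G"
proof -
  interpret L: lem36 G H
    using assms by (simp add: lem36_def lem36_axioms_def)
  show ?thesis using L.main unfolding L.sn_def subnormal_def .
qed

end
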